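(* $\bm M\succeq\bm 0$, $\bm M_K\succeq\bm 0$, $\bm H\succ\bm 0$ and $\bm H_K\succ\bm 0$.
   Context: Let $\bm X=(\bm X_1,\dots,\bm X_K)\in\mathbb R^{n\times p}$ with $\bm X_i\in\mathbb R^{n\times p_i}$, $\bm A=\bm X^\top\bm X=(\bm A_1,\dots,\bm A_K)$, $\bm A_i=\bm X^\top\bm X_i$, and $\mu>0$. Let $\bm S=\eta\bm I_p-\mu\bm A^\top\bm A$ with $\eta$ larger than the largest eigenvalue of $\mu\bm A^\top\bm A$, and $\bm S_i'=\eta_i\bm I_{p_i}-\mu\bm A_i^\top\bm A_i$ with $\eta_i$ larger than the largest eigenvalue of $\mu\bm A_i^\top\bm A_i$. Define $\bm M=\begin{pmatrix}\mu\bm A^\top\bm A&\bm 0&\bm A^\top\\\bm 0&\mu\bm I_p&-\bm I_p\\\bm A&-\bm I_p&\frac{2}{\mu}\bm I_p\end{pmatrix}$, $\bm H=\begin{pmatrix}\mu\bm A^\top\bm A+\bm S&\bm 0&\bm A^\top\\\bm 0&\mu\bm I_p&-\bm I_p\\\bm A&-\bm I_p&\frac{2}{\mu}\bm I_p\end{pmatrix}$, $\bm M_K=\begin{pmatrix}\bm\Lambda_K&\bm G^\top\\\bm G&\frac{K+1}{\mu}\bm I_p\end{pmatrix}$, $\bm H_K=\begin{pmatrix}\tilde{\bm\Lambda}_K&\bm G^\top\\\bm G&\frac{K+1}{\mu}\bm I_p\end{pmatrix}$, where $\bm G=(\bm A_1,\dots,\bm A_K,-\bm I_p)$, $\bm\Lambda_K=\mathrm{diag}(\mu\bm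 A_1^\top\bm A_1,\dots,\mu\bm A_K^\top\bm A_K,\mu\bm I_p)$, $\tilde{\bm\Lambda}_K=\mathrm{diag}(\mu\bm A_1^\top\bm A_1+\bm S_1',\dots,\mu\bm A_K^\top\bm A_K+\bm S_K',\mu\bm I_p)=\mathrm{diag}(\eta_1\bm I_{p_1},\dots,\eta_K\bm I_{p_K},\mu\bm I_p)$. $\succeq\bm 0$ means positive semidefinite, $\succ\bm 0$ positive definite. *)

theory Defs
  imports "Jordan_Normal_Form.Jordan_Normal_Form"
begin

fun hcat :: "nat \<Rightarrow> 'a :: zero mat list \<Rightarrow> 'a mat" where
  "hcat n [] = 0\<^sub>m n 0"
| "hcat n (X # Xs) = four_block_mat X (hcat n Xs) (0\<^sub>m 0 (dim_col X)) (0\<^sub>m 0 (dim_col (hcat n Xs)))"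

definition vcat2 :: "'a :: zero mat \<Rightarrow> 'a mat \<Rightarrow> 'a mat" where
  "vcat2 A B = four_block_mat A (0\<^sub>m (dim_row A) 0) B (0\<^sub>m (dim_row B) 0)"

definition hcat2 :: "'a :: zero mat \<Rightarrow> 'a mat \<Rightarrow> 'a mat" where
  "hcat2 A B = four_block_mat A B (0\<^sub>m 0 (dim_col A)) (0\<^sub>m 0 (dim_col B))"

text \<open>3 x 3 block matrix [[a,b,c],[d,e,f],[g,h,i]].\<close>
definition block3 :: "'a :: zero mat \<Rightarrow> 'a mat \<Rightarrow> 'a mat \<Rightarrow> 'a mat \<Rightarrow> 'a mat \<Rightarrow> 'a mat
    \<Rightarrow> 'a mat \<Rightarrow> 'a mat \<Rightarrow> 'a mat \<Rightarrow> 'a mat" where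
  "block3 a b c d e f g h i =
     four_block_mat (four_block_mat a b d e) (vcat2 c f) (hcat2 g h) i"

definition psd :: "real mat \<Rightarrow> bool" where
  "psd A \<longleftrightarrow> A \<in> carrier_mat (dim_row A) (dim_row A) \<and> A\<^sup>T = A \<and>
     (\<forall>x \<in> carrier_vec (dim_row A). x \<bullet> (A *\<^sub>v x) \<ge> 0)"

definition pd :: "real mat \<Rightarrow> bool" where
  "pd A \<longleftrightarrow> A \<in> carrier_mat (dim_row A) (dim_row A) \<and> A\<^sup>T = A \<and>
     (\<forall>x \<in> carrier_vec (dim_row A). x \<noteq> 0\<^sub>v (dim_row A) \<longrightarrow> x \<bullet> (A *\<^sub>v x) > 0)"

text \<open>X = (X_1,...,X_K) with each X_i having n rows; p = total number of columns.\<close>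
definition Xmat :: "nat \<Rightarrow> real mat list \<Rightarrow> real mat" where
  "Xmat n Xs = hcat n Xs"

definition pdim :: "nat \<Rightarrow> real mat list \<Rightarrow> nat" where
  "pdim n Xs = dim_col (Xmat n Xs)"

definition Amat :: "nat \<Rightarrow> real mat list \<Rightarrow> real mat" where
  "Amat n Xs = (Xmat n Xs)\<^sup>T * Xmat n Xs"

definition Ablocks :: "nat \<Rightarrow> real mat list \<Rightarrow> real mat list" where
  "Ablocks n Xs = map (\<lambda>Xi. (Xmat n Xs)\<^sup>T * Xi) Xs"

definition Smat :: "nat \<Rightarrow> real mat list \<Rightarrow> real \<Rightarrow> real \<Rightarrow> real mat" where
  "Smat n Xs \<mu> \<eta> = \<eta> \<cdot>\<^sub>m 1\<^sub>m (pdim n Xs) - \<mu> \<cdot>\<^sub>m ((Amat n Xs)\<^sup>T * Amat n Xs)"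

definition Mmat :: "nat \<Rightarrow> real mat list \<Rightarrow> real \<Rightarrow> real mat" where
  "Mmat n Xs \<mu> = (let p = pdim n Xs; A = Amat n Xs in
     block3 (\<mu> \<cdot>\<^sub>m (A\<^sup>T * A)) (0\<^sub>m p p) (A\<^sup>T)
            (0\<^sub>m p p) (\<mu> \<cdot>\<^sub>m 1\<^sub>m p) (- 1\<^sub>m p)
            A (- 1\<^sub>m p) ((2 / \<mu>) \<cdot>\<^sub>m 1\<^sub>m p))"

definition Hmat :: "nat \<Rightarrow> real mat list \<Rightarrow> real \<Rightarrow> real \<Rightarrow> real mat" where
  "Hmat n Xs \<mu> \<eta> = (let p = pdim n Xs; A = Amat n Xs in
     block3 (\<mu> \<cdot>\<^sub>m (A\<^sup>T * A) + Smat n Xs \<mu> \<eta>) (0\<^sub>m p p) (A\<^sup>T)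
            (0\<^sub>m p p) (\<mu> \<cdot>\<^sub>m 1\<^sub>m p) (- 1\<^sub>m p)
            A (- 1\<^sub>m p) ((2 / \<mu>) \<cdot>\<^sub>m 1\<^sub>m p))"

definition Gmat :: "nat \<Rightarrow> real mat list \<Rightarrow> real mat" where
  "Gmat n Xs = hcat (pdim n Xs) (Ablocks n Xs @ [- 1\<^sub>m (pdim n Xs)])"

definition Sblock :: "real \<Rightarrow> real \<Rightarrow> real mat \<Rightarrow> real mat" where
  "Sblock \<mu> \<eta>i Ai = \<eta>i \<cdot>\<^sub>m 1\<^sub>m (dim_col Ai) - \<mu> \<cdot>\<^sub>m (Ai\<^sup>T * Ai)"

definition LambdaK :: "nat \<Rightarrow> real mat list \<Rightarrow> real \<Rightarrow> real mat" where
  "LambdaK n Xs \<mu> = diag_block_mat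
     (map (\<lambda>Ai. \<mu> \<cdot>\<^sub>m (Ai\<^sup>T * Ai)) (Ablocks n Xs) @ [\<mu> \<cdot>\<^sub>m 1\<^sub>m (pdim n Xs)])"

definition LambdaK_tilde :: "nat \<Rightarrow> real mat list \<Rightarrow> real \<Rightarrow> real list \<Rightarrow> real mat" where
  "LambdaK_tilde n Xs \<mu> \<eta>s = diag_block_mat
     (map (\<lambda>(Ai, \<eta>i). \<mu> \<cdot>\<^sub>m (Ai\<^sup>T * Ai) + Sblock \<mu> \<eta>i Ai) (zip (Ablocks n Xs) \<eta>s)
      @ [\<mu> \<cdot>\<^sub>m 1\<^sub>m (pdim n Xs)])"

definition MKmat :: "nat \<Rightarrow> real mat list \<Rightarrow> real \<Rightarrow> real mat" where
  "MKmat n Xs \<mu> = (let G = Gmat n Xs; K = length Xs; p = pdim n Xs in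
     four_block_mat (LambdaK n Xs \<mu>) (G\<^sup>T) G ((real (K + 1) / \<mu>) \<cdot>\<^sub>m 1\<^sub>m p))"

definition HKmat :: "nat \<Rightarrow> real mat list \<Rightarrow> real \<Rightarrow> real list \<Rightarrow> real mat" where
  "HKmat n Xs \<mu> \<eta>s = (let G = Gmat n Xs; K = length Xs; p = pdim n Xs in
     four_block_mat (LambdaK_tilde n Xs \<mu> \<eta>s) (G\<^sup>T) G ((real (K + 1) / \<mu>) \<cdot>\<^sub>m 1\<^sub>m p))"

end

theory Submission
  imports Defs "Jordan_Normal_Form.Spectral_Radius"
begin

lemma real_sym_has_eigenvalue:
  fixes B :: "real mat"
  assumes B: "B \<in> carrier_mat k k" and sym: "B\<^sup>T = B" and k: "k > 0"
  shows "\<exists>e. eigenvalue B e"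
proof -
  define Bc where "Bc = map_mat complex_of_real B"
  have Bc: "Bc \<in> carrier_mat k k" using B unfolding Bc_def by auto
  from spectrum_non_empty[OF Bc k] obtain e where "eigenvalue Bc e"
    unfolding spectrum_def by auto
  then obtain v where v: "v \<in> carrier_vec k" "v \<noteq> 0\<^sub>v k" "Bc *\<^sub>v v = e \<cdot>\<^sub>v v"
    unfolding eigenvalue_def eigenvector_def using Bc by auto
  have Bsym: "B $$ (i,j) = B $$ (j,i)" if "i < k" "j < k" for i j
    using arg_cong[OF sym, of "\<lambda>M. M $$ (i,j)"] that B by auto
  have ev: "(\<Sum>j<k. of_real (B $$ (i,j)) * v $ j) = e * v $ i" if "i < k" for i
  proof -
    have "(Bc *\<^sub>v v) $ i = e * v $ i" using v that by auto
    moreover have "(Bc *\<^sub>v v) $ i = (\<Sum>j<k. of_real (B $$ (i,j)) * v $ j)"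
      using that B v(1) unfolding Bc_def mult_mat_vec_def scalar_prod_def
      by (auto intro!: sum.cong simp: lessThan_atLeast0)
    ultimately show ?thesis by simp
  qed
  define s where "s = (\<Sum>i<k. \<Sum>j<k. cnj (v $ i) * of_real (B $$ (i,j)) * v $ j)"
  define N where "N = (\<Sum>i<k. cnj (v $ i) * v $ i)"
  have s1: "s = e * N"
  proof -
    have "s = (\<Sum>i<k. cnj (v $ i) * (\<Sum>j<k. of_real (B $$ (i,j)) * v $ j))"
      unfolding s_def by (simp add: sum_distrib_left mult.assoc)
    also have "\<dots> = (\<Sum>i<k. cnj (v $ i) * (e * v $ i))"
      using ev by simp
    finally show ?thesis unfolding N_def by (simp add: sum_distrib_left ac_simps)
  qed
  have s2: "cnj s = s"
  proof -
    have "cnj s = (\<Sum>i<k. \<Sum>j<k. v $ i * of_real (B $$ (i,j)) * cnj (v $ j))"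
      unfolding s_def by (simp add: cnj_sum)
    also have "\<dots> = (\<Sum>j<k. \<Sum>i<k. v $ i * of_real (B $$ (i,j)) * cnj (v $ j))"
      by (rule sum.swap)
    also have "\<dots> = s" unfolding s_def
      by (intro sum.cong refl, simp add: Bsym ac_simps)
    finally show ?thesis .
  qed
  have N: "N = of_real (\<Sum>i<k. (cmod (v $ i))^2)"
    unfolding N_def of_real_sum by (intro sum.cong refl, simp add: complex_norm_square[symmetric] mult.commute del: of_real_power)
  obtain i where i: "i < k" "v $ i \<noteq> 0" using v by (metis eq_vecI carrier_vecD index_zero_vec)
  have "(\<Sum>i<k. (cmod (v $ i))^2) > 0"
    by (rule sum_pos2[of _ i], insert i, auto)
  hence N0: "N \<noteq> 0" unfolding N by (metis of_real_eq_0_iff less_irrefl)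
  have "cnj e * N = e * N" using s1 s2 N by (metis complex_cnj_complex_of_real complex_cnj_mult)
  hence "cnj e = e" using N0 by simp
  hence e_real: "e = of_real (Re e)" by (metis Reals_cnj_iff complex_is_Real_iff of_real_Re)
  have "poly (char_poly Bc) e = 0" using \<open>eigenvalue Bc e\<close> eigenvalue_root_char_poly[OF Bc] by simp
  also have "char_poly Bc = map_poly of_real (char_poly B)"
    unfolding Bc_def using of_real_hom.char_poly_hom[OF B] by simp
  finally have "poly (map_poly of_real (char_poly B)) (of_real (Re e) :: complex) = 0" using e_real by simp
  hence "poly (char_poly B) (Re e) = 0" unfolding of_real_hom.poly_map_poly by simp
  thus ?thesis using eigenvalue_root_char_poly[OF B] by blast
qed

lemma conj_real_vec[simp]: "conjugate (w :: real vec) = w"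
  by (rule eq_vecI, auto simp: conjugate_vec_def)

lemma smult_mat_mult_vec:
  assumes "A \<in> carrier_mat nr nc" "v \<in> carrier_vec nc"
  shows "(k \<cdot>\<^sub>m A) *\<^sub>v v = k \<cdot>\<^sub>v (A *\<^sub>v (v :: 'a :: comm_ring vec))"
  using assms by (intro eq_vecI, auto simp: scalar_prod_def sum_distrib_left ac_simps)

lemma qf_four_block:
  fixes A :: "'a :: comm_ring mat"
  assumes A: "A \<in> carrier_mat n1 n1" and B: "B \<in> carrier_mat n1 n2"
    and C: "C \<in> carrier_mat n2 n1" and D: "D \<in> carrier_mat n2 n2"
    and a: "a \<in> carrier_vec n1" and d: "d \<in> carrier_vec n2"
  shows "(a @\<^sub>v d) \<bullet> (four_block_mat A B C D *\<^sub>v (a @\<^sub>v d)) =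
     a \<bullet> (A *\<^sub>v a) + a \<bullet> (B *\<^sub>v d) + d \<bullet> (C *\<^sub>v a) + d \<bullet> (D *\<^sub>v d)"
proof -
  have "(a @\<^sub>v d) \<bullet> (four_block_mat A B C D *\<^sub>v (a @\<^sub>v d)) =
     (a @\<^sub>v d) \<bullet> ((A *\<^sub>v a + B *\<^sub>v d) @\<^sub>v (C *\<^sub>v a + D *\<^sub>v d))"
    by (simp add: four_block_mat_mult_vec[OF A B C D a d])
  also have "\<dots> = a \<bullet> (A *\<^sub>v a + B *\<^sub>v d) + d \<bullet> (C *\<^sub>v a + D *\<^sub>v d)"
    by (rule scalar_prod_append[of _ n1 _ n2], insert assms, auto)
  also have "\<dots> = a \<bullet> (A *\<^sub>v a) + a \<bullet> (B *\<^sub>v d) + (d \<bullet> (C *\<^sub>v a) + d \<bullet> (D *\<^sub>v d))"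
    by (subst scalar_prod_add_distrib[of _ n1], insert assms, auto,
        subst scalar_prod_add_distrib[of _ n2], insert assms, auto)
  finally show ?thesis by (simp add: ac_simps)
qed

lemma sym_pos_eig_pd:
  fixes C :: "real mat"
  assumes "C \<in> carrier_mat k k" "C\<^sup>T = C" "\<forall>e. eigenvalue C e \<longrightarrow> e > 0"
    "x \<in> carrier_vec k" "x \<noteq> 0\<^sub>v k"
  shows "x \<bullet> (C *\<^sub>v x) > 0"
  using assms
proof (induction k arbitrary: C x)
  case 0
  then have "x = 0\<^sub>v 0" by (intro eq_vecI) auto
  then show ?case using 0 by simp
next
  case (Suc m C x)
  define n where "n = Suc m"
  have C: "C \<in> carrier_mat n n" and sym: "C\<^sup>T = C" and pos: "\<forall>e. eigenvalue C e \<longrightarrow> e > 0"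
    and x: "x \<in> carrier_vec n" "x \<noteq> 0\<^sub>v n" using Suc.prems unfolding n_def by auto
  obtain e where e: "eigenvalue C e" using real_sym_has_eigenvalue[OF C sym] unfolding n_def by auto
  have epos: "e > 0" using pos e by auto
  obtain v where v: "v \<in> carrier_vec n" "v \<noteq> 0\<^sub>v n" "C *\<^sub>v v = e \<cdot>\<^sub>v v"
    using e C unfolding eigenvalue_def eigenvector_def by auto
  have vv: "v \<bullet> v > 0"
  proof -
    obtain i where i: "i < n" "v $ i \<noteq> 0" using v by (metis eq_vecI carrier_vecD index_zero_vec)
    have "v \<bullet> v = (\<Sum>j\<in>{0..<n}. (v $ j)^2)" using v unfolding scalar_prod_def by (auto simp: power2_eq_square)
    also have "\<dots> > 0" by (rule sum_pos2[of _ i], insert i, auto)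
    finally show ?thesis .
  qed
  define u where "u = (1 / sqrt (v \<bullet> v)) \<cdot>\<^sub>v v"
  have u: "u \<in> carrier_vec n" using v unfolding u_def by auto
  have uu: "u \<bullet> u = 1" unfolding u_def using v vv
    by (simp add: real_sqrt_mult[symmetric] power2_eq_square[symmetric])
  have u0: "u \<noteq> 0\<^sub>v n" using uu u by auto
  have Cu: "C *\<^sub>v u = e \<cdot>\<^sub>v u" unfolding u_def using v C
    by (simp add: mult_mat_vec[OF C v(1)] smult_smult_assoc mult.commute)
  interpret cof_vec_space n "TYPE(real)" .
  define b where "b = basis_completion u"
  from basis_completion[OF u u0, folded b_def]
  have dist_b: "distinct b" and indep: "\<not> lin_dep (set b)" and b: "set b \<subseteq> carrier_vec n"
    and hdb: "hd b = u" and len_b: "length b = n" by auto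
  from hdb len_b obtain vs where bv: "b = u # vs" unfolding n_def by (cases b, auto)
  define ws where "ws = gram_schmidt n b"
  from gram_schmidt_result[OF b dist_b indep ws_def]
  have ws: "set ws \<subseteq> carrier_vec n" "corthogonal ws" "length ws = n" by (auto simp: len_b)
  have hdws: "hd ws = u" unfolding ws_def bv using gram_schmidt_hd[OF u] by simp
  have wsorth: "ws ! i \<bullet> ws ! j = 0 \<longleftrightarrow> i \<noteq> j" if "i < n" "j < n" for i j
    using ws(2) that ws(3) unfolding corthogonal_def by auto
  have wsi: "ws ! i \<in> carrier_vec n" if "i < n" for i using ws that by auto
  define us where "us = map (\<lambda>w. (1 / sqrt (w \<bullet> w)) \<cdot>\<^sub>v w) ws"
  have len_us: "length us = n" unfolding us_def using ws by simp
  have usi: "us ! i \<in> carrier_vec n" if "i < n" for i using wsi[OF that] that ws(3) unfolding us_def by simp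
  have wwpos: "ws ! i \<bullet> ws ! i > 0" if "i < n" for i
  proof -
    have "ws ! i \<bullet> ws ! i \<ge> 0" using wsi[OF that] unfolding scalar_prod_def
      by (auto intro!: sum_nonneg)
    moreover have "ws ! i \<bullet> ws ! i \<noteq> 0" using wsorth[OF that that] by simp
    ultimately show ?thesis by simp
  qed
  have usorth: "us ! i \<bullet> us ! j = (if i = j then 1 else 0)" if "i < n" "j < n" for i j
  proof -
    have "us ! i \<bullet> us ! j = (1 / sqrt (ws ! i \<bullet> ws ! i)) * (1 / sqrt (ws ! j \<bullet> ws ! j)) * (ws ! i \<bullet> ws ! j)"
      unfolding us_def using that ws(3) wsi[OF that(1)] wsi[OF that(2)] by simp
    then show ?thesis using wsorth[OF that] wwpos[OF that(1)] wwpos[OF that(2)]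
      by (auto simp: real_sqrt_mult[symmetric] power2_eq_square[symmetric])
  qed
  have us0: "us ! 0 = u"
  proof -
    have "ws ! 0 = u" using hdws ws(3) unfolding n_def by (cases ws, auto)
    thus ?thesis unfolding us_def using ws(3) uu unfolding n_def by simp
  qed
  define U where "U = mat_of_cols n us"
  have U: "U \<in> carrier_mat n n" unfolding U_def using len_us by auto
  have colU: "col U i = us ! i" if "i < n" for i unfolding U_def using that len_us usi[OF that] by simp
  have UtU: "U\<^sup>T * U = 1\<^sub>m n"
    by (rule eq_matI, insert U colU usorth, auto)
  have UUt: "U * U\<^sup>T = 1\<^sub>m n"
    by (rule mat_mult_left_right_inverse[OF _ U UtU], insert U, auto)
  define T where "T = U\<^sup>T * (C * U)"
  have T: "T \<in> carrier_mat n n" unfolding T_def using U C by auto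
  have Tent: "T $$ (i,j) = us ! i \<bullet> (C *\<^sub>v us ! j)" if "i < n" "j < n" for i j
    unfolding T_def using that U C colU by (simp add: mult_mat_vec_def)
  have Tsym: "T\<^sup>T = T"
  proof -
    have "T\<^sup>T = (C * U)\<^sup>T * U" unfolding T_def
      by (subst transpose_mult[of _ n n _ n], insert U C, auto)
    also have "\<dots> = U\<^sup>T * C\<^sup>T * U"
      by (subst transpose_mult[of _ n n _ n], insert U C, auto)
    also have "\<dots> = T" unfolding T_def sym using U C by (simp add: assoc_mult_mat[of _ n n _ n _ n])
    finally show ?thesis .
  qed
  have Ti0: "T $$ (i,0) = (if i = 0 then e else 0)" if "i < n" for i
  proof -
    have "T $$ (i,0) = us ! i \<bullet> (e \<cdot>\<^sub>v u)" using Tent[OF that] Cu us0 unfolding n_def by simp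
    also have "\<dots> = e * (us ! i \<bullet> us ! 0)" using usi[OF that] u us0 by simp
    finally show ?thesis using usorth[OF that] unfolding n_def by simp
  qed
  have T0j: "T $$ (0,j) = (if j = 0 then e else 0)" if "j < n" for j
    using Ti0[OF that] arg_cong[OF Tsym, of "\<lambda>M. M $$ (j,0)"] that T unfolding n_def by auto
  define C' where "C' = mat m m (\<lambda>(i,j). T $$ (Suc i, Suc j))"
  have C': "C' \<in> carrier_mat m m" unfolding C'_def by auto
  have Tsym': "T $$ (a,b) = T $$ (b,a)" if "a < n" "b < n" for a b
    using arg_cong[OF Tsym, of "\<lambda>M. M $$ (a,b)"] that T by auto
  have C'sym: "C'\<^sup>T = C'"
    by (rule eq_matI, unfold C'_def, insert Tsym', auto simp: n_def)
  have Tblock: "T = four_block_mat (mat 1 1 (\<lambda>_. e)) (0\<^sub>m 1 m) (0\<^sub>m m 1) C'"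
  proof (rule eq_matI)
    fix i j assume ij: "i < dim_row (four_block_mat (mat 1 1 (\<lambda>_. e)) (0\<^sub>m 1 m) (0\<^sub>m m 1) C')"
      "j < dim_col (four_block_mat (mat 1 1 (\<lambda>_. e)) (0\<^sub>m 1 m) (0\<^sub>m m 1) C')"
    hence ij': "i < n" "j < n" using C' unfolding n_def by auto
    show "T $$ (i, j) = four_block_mat (mat 1 1 (\<lambda>_. e)) (0\<^sub>m 1 m) (0\<^sub>m m 1) C' $$ (i, j)"
    proof (cases "i = 0 \<or> j = 0")
      case True
      then show ?thesis using Ti0[OF ij'(1)] T0j[OF ij'(2)] ij C' by auto
    next
      case False
      then obtain i' j' where "i = Suc i'" "j = Suc j'" by (metis not0_implies_Suc)
      then show ?thesis using ij C' unfolding C'_def by auto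
    qed
  qed (insert T C', auto simp: n_def)
  have C'pos: "\<forall>f. eigenvalue C' f \<longrightarrow> f > 0"
  proof (intro allI impI)
    fix f assume "eigenvalue C' f"
    then obtain w where w: "w \<in> carrier_vec m" "w \<noteq> 0\<^sub>v m" "C' *\<^sub>v w = f \<cdot>\<^sub>v w"
      using C' unfolding eigenvalue_def eigenvector_def by auto
    define y where "y = 0\<^sub>v 1 @\<^sub>v w"
    have y: "y \<in> carrier_vec n" unfolding y_def n_def using append_carrier_vec[OF zero_carrier_vec[of 1] w(1)] by simp
    have y0: "y \<noteq> 0\<^sub>v n"
    proof
      assume y00: "y = 0\<^sub>v n"
      obtain i where i: "i < m" "w $ i \<noteq> 0" using w by (metis eq_vecI carrier_vecD index_zero_vec)
      have "y $ Suc i = w $ i" unfolding y_def using i w by simp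
      thus False using y00 i unfolding n_def by simp
    qed
    have Ty: "T *\<^sub>v y = f \<cdot>\<^sub>v y"
    proof -
      have "T *\<^sub>v y = (mat 1 1 (\<lambda>_. e) *\<^sub>v 0\<^sub>v 1 + 0\<^sub>m 1 m *\<^sub>v w) @\<^sub>v (0\<^sub>m m 1 *\<^sub>v 0\<^sub>v 1 + C' *\<^sub>v w)"
        unfolding Tblock y_def by (rule four_block_mat_mult_vec, insert C' w, auto)
      also have "\<dots> = 0\<^sub>v 1 @\<^sub>v (f \<cdot>\<^sub>v w)" using w C'
        by (intro arg_cong2[of _ _ _ _ "(@\<^sub>v)"] eq_vecI, auto)
      also have "\<dots> = f \<cdot>\<^sub>v y" unfolding y_def by (intro eq_vecI, insert w, auto)
      finally show ?thesis .
    qed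
    have Uy: "U *\<^sub>v y \<in> carrier_vec n" using U y by auto
    have "U *\<^sub>v y \<noteq> 0\<^sub>v n"
    proof
      assume "U *\<^sub>v y = 0\<^sub>v n"
      hence "U\<^sup>T *\<^sub>v (U *\<^sub>v y) = 0\<^sub>v n" using U by auto
      moreover have "U\<^sup>T *\<^sub>v (U *\<^sub>v y) = y" using UtU U y
        by (metis assoc_mult_mat_vec one_mult_mat_vec transpose_carrier_mat)
      ultimately show False using y0 by simp
    qed
    moreover have "C *\<^sub>v (U *\<^sub>v y) = f \<cdot>\<^sub>v (U *\<^sub>v y)"
    proof -
      have "C *\<^sub>v (U *\<^sub>v y) = (U * U\<^sup>T) *\<^sub>v (C *\<^sub>v (U *\<^sub>v y))" using UUt C U y by simp
      also have "\<dots> = U *\<^sub>v (T *\<^sub>v y)" unfolding T_def using U C y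
        by (simp add: assoc_mult_mat_vec[of _ n n _ n])
      also have "\<dots> = f \<cdot>\<^sub>v (U *\<^sub>v y)" unfolding Ty using U y by (simp add: mult_mat_vec)
      finally show ?thesis .
    qed
    ultimately have "eigenvalue C f" unfolding eigenvalue_def eigenvector_def using Uy C by auto
    thus "f > 0" using pos by auto
  qed
  note IH = Suc.IH[OF C' C'sym C'pos]
  define y where "y = U\<^sup>T *\<^sub>v x"
  have y: "y \<in> carrier_vec n" unfolding y_def using U x by auto
  have Uy: "U *\<^sub>v y = x" unfolding y_def using UUt U x
    by (metis assoc_mult_mat_vec one_mult_mat_vec transpose_carrier_mat)
  have y0: "y \<noteq> 0\<^sub>v n" using Uy x U by auto
  have "x \<bullet> (C *\<^sub>v x) = (U *\<^sub>v y) \<bullet> (C *\<^sub>v (U *\<^sub>v y))" using Uy by simp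
  also have "\<dots> = y \<bullet> (U\<^sup>T *\<^sub>v (C *\<^sub>v (U *\<^sub>v y)))"
    using transpose_vec_mult_scalar[of "U\<^sup>T" n n "C *\<^sub>v (U *\<^sub>v y)" y] U C y
    by simp
  also have "\<dots> = y \<bullet> (T *\<^sub>v y)" unfolding T_def using U C y
    by (simp add: assoc_mult_mat_vec[of _ n n _ n])
  finally have eq: "x \<bullet> (C *\<^sub>v x) = y \<bullet> (T *\<^sub>v y)" .
  define y1 where "y1 = vec_first y 1"
  define y2 where "y2 = vec_last y m"
  have yy: "y = y1 @\<^sub>v y2" unfolding y1_def y2_def using y unfolding n_def by simp
  have "y \<bullet> (T *\<^sub>v y) = y1 \<bullet> (mat 1 1 (\<lambda>_. e) *\<^sub>v y1) + y1 \<bullet> (0\<^sub>m 1 m *\<^sub>v y2)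
      + y2 \<bullet> (0\<^sub>m m 1 *\<^sub>v y1) + y2 \<bullet> (C' *\<^sub>v y2)"
    unfolding yy Tblock by (rule qf_four_block, insert C', auto simp: y1_def y2_def)
  also have "\<dots> = e * (y1 $ 0)^2 + y2 \<bullet> (C' *\<^sub>v y2)"
    using vec_last_carrier[of y m] unfolding y1_def y2_def[symmetric]
    by (simp add: scalar_prod_def power2_eq_square)
  finally have eq2: "x \<bullet> (C *\<^sub>v x) = e * (y1 $ 0)^2 + y2 \<bullet> (C' *\<^sub>v y2)" using eq by simp
  show ?case
  proof (cases "y2 = 0\<^sub>v m")
    case True
    have "y1 $ 0 \<noteq> 0"
    proof
      assume "y1 $ 0 = 0"
      hence "y1 = 0\<^sub>v 1" unfolding y1_def by (intro eq_vecI, auto)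
      hence "y = 0\<^sub>v 1 @\<^sub>v 0\<^sub>v m" using True yy by simp
      hence "y = 0\<^sub>v n" unfolding n_def by (auto intro!: eq_vecI)
      thus False using y0 by simp
    qed
    hence "e * (y1 $ 0)^2 > 0" using epos by simp
    thus ?thesis using eq2 True C' by (simp add: n_def)
  next
    case False
    have "y2 \<bullet> (C' *\<^sub>v y2) > 0" by (rule IH, insert False, auto simp: y2_def)
    moreover have "e * (y1 $ 0)^2 \<ge> 0" using epos by simp
    ultimately show ?thesis using eq2 by (simp add: n_def)
  qed
qed

definition okp :: "nat \<Rightarrow> real mat \<times> real mat \<Rightarrow> bool" where
  "okp m LG = (snd LG \<in> carrier_mat m (dim_col (snd LG)) \<and>
     fst LG \<in> carrier_mat (dim_col (snd LG)) (dim_col (snd LG)) \<and> (fst LG)\<^sup>T = fst LG)"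

definition sz :: "(real mat \<times> real mat) list \<Rightarrow> nat" where
  "sz LGs = sum_list (map (\<lambda>LG. dim_col (snd LG)) LGs)"

lemma sz_simps[simp]: "sz [] = 0" "sz (LG # LGs) = dim_col (snd LG) + sz LGs"
  unfolding sz_def by auto

lemma hcat_carrier_gen:
  "\<forall>LG\<in>set LGs. okp m LG \<Longrightarrow> hcat m (map snd LGs) \<in> carrier_mat m (sz LGs)"
proof (induction LGs)
  case Nil thus ?case by simp
next
  case (Cons LG LGs)
  have G: "snd LG \<in> carrier_mat m (dim_col (snd LG))" using Cons.prems by (simp add: okp_def)
  have H: "hcat m (map snd LGs) \<in> carrier_mat m (sz LGs)" using Cons by simp
  have "four_block_mat (snd LG) (hcat m (map snd LGs)) (0\<^sub>m 0 (dim_col (snd LG))) (0\<^sub>m 0 (dim_col (hcat m (map snd LGs))))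
     \<in> carrier_mat (m + 0) (dim_col (snd LG) + sz LGs)"
    by (rule four_block_carrier_mat[OF G], insert H, auto)
  thus ?case by simp
qed

lemma diag_carrier_gen:
  "\<forall>LG\<in>set LGs. okp m LG \<Longrightarrow> diag_block_mat (map fst LGs) \<in> carrier_mat (sz LGs) (sz LGs)"
  by (induction LGs, auto simp: okp_def Let_def)

lemma diag_sym_gen:
  "\<forall>LG\<in>set LGs. okp m LG \<Longrightarrow> (diag_block_mat (map fst LGs))\<^sup>T = diag_block_mat (map fst LGs)"
proof (induction LGs)
  case Nil thus ?case by auto
next
  case (Cons LG LGs)
  obtain L G where LG: "LG = (L, G)" by force
  have L: "L \<in> carrier_mat (dim_col G) (dim_col G)" "L\<^sup>T = L" using Cons.prems LG by (auto simp: okp_def)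
  have D: "diag_block_mat (map fst LGs) \<in> carrier_mat (sz LGs) (sz LGs)"
    using diag_carrier_gen Cons.prems by auto
  have ih: "(diag_block_mat (map fst LGs))\<^sup>T = diag_block_mat (map fst LGs)" using Cons by auto
  show ?case unfolding LG using L D ih
    by (simp add: Let_def, subst transpose_four_block_mat[of _ "dim_col G" "dim_col G" _ "sz LGs" _ "sz LGs"], auto)
qed

lemma zero_mat_mult_vec_gen: "v \<in> carrier_vec c \<Longrightarrow> 0\<^sub>m r c *\<^sub>v v = (0\<^sub>v r :: 'a :: comm_ring vec)"
  by (intro eq_vecI, auto simp: scalar_prod_def)

lemma append_vec_zero_dim: "w \<in> carrier_vec 0 \<Longrightarrow> v @\<^sub>v w = v"
  by (intro eq_vecI, auto)

lemma decomp_gen: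
  assumes ok: "\<forall>LG\<in>set LGs. okp m LG" and z: "z \<in> carrier_vec m" and w: "w \<in> carrier_vec (sz LGs)"
  shows "\<exists>ws. length ws = length LGs \<and> (\<forall>i<length LGs. ws ! i \<in> carrier_vec (dim_col (snd (LGs ! i))))
    \<and> ((\<forall>i<length LGs. ws ! i = 0\<^sub>v (dim_col (snd (LGs ! i)))) \<longrightarrow> w = 0\<^sub>v (sz LGs))
    \<and> w \<bullet> (diag_block_mat (map fst LGs) *\<^sub>v w) + 2 * (z \<bullet> (hcat m (map snd LGs) *\<^sub>v w)) =
      (\<Sum>i<length LGs. ws ! i \<bullet> (fst (LGs ! i) *\<^sub>v ws ! i) + 2 * (z \<bullet> (snd (LGs ! i) *\<^sub>v ws ! i)))"
  using ok w
proof (induction LGs arbitrary: w)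
  case Nil
  then show ?case by (intro exI[of _ "[]"], auto simp: scalar_prod_def)
next
  case (Cons LG LGs w)
  obtain L G where LG: "LG = (L, G)" by force
  define k where "k = dim_col G"
  define s where "s = sz LGs"
  have L: "L \<in> carrier_mat k k" and G: "G \<in> carrier_mat m k" using Cons.prems LG by (auto simp: okp_def k_def)
  have ok': "\<forall>LG\<in>set LGs. okp m LG" using Cons.prems by auto
  have D: "diag_block_mat (map fst LGs) \<in> carrier_mat s s" using diag_carrier_gen[OF ok'] s_def by auto
  have H: "hcat m (map snd LGs) \<in> carrier_mat m s" using hcat_carrier_gen[OF ok'] s_def by auto
  have w: "w \<in> carrier_vec (k + s)" using Cons.prems LG k_def s_def by auto
  define a where "a = vec_first w k"
  define d where "d = vec_last w s"
  have a: "a \<in> carrier_vec k" and d: "d \<in> carrier_vec s" unfolding a_def d_def by auto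
  have wad: "w = a @\<^sub>v d" unfolding a_def d_def using w by simp
  obtain ws where ws: "length ws = length LGs" "\<forall>i<length LGs. ws ! i \<in> carrier_vec (dim_col (snd (LGs ! i)))"
    "(\<forall>i<length LGs. ws ! i = 0\<^sub>v (dim_col (snd (LGs ! i)))) \<longrightarrow> d = 0\<^sub>v s"
    "d \<bullet> (diag_block_mat (map fst LGs) *\<^sub>v d) + 2 * (z \<bullet> (hcat m (map snd LGs) *\<^sub>v d)) =
      (\<Sum>i<length LGs. ws ! i \<bullet> (fst (LGs ! i) *\<^sub>v ws ! i) + 2 * (z \<bullet> (snd (LGs ! i) *\<^sub>v ws ! i)))"
    using Cons.IH[OF ok'] d s_def by blast
  have diag: "diag_block_mat (map fst (LG # LGs)) = four_block_mat L (0\<^sub>m k s) (0\<^sub>m s k) (diag_block_mat (map fst LGs))"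
    using LG D L by (simp add: Let_def)
  have qd: "w \<bullet> (diag_block_mat (map fst (LG # LGs)) *\<^sub>v w) = a \<bullet> (L *\<^sub>v a) + d \<bullet> (diag_block_mat (map fst LGs) *\<^sub>v d)"
    unfolding diag wad by (subst qf_four_block[OF L _ _ D a d], insert a d, auto simp: zero_mat_mult_vec_gen)
  have hc: "hcat m (map snd (LG # LGs)) *\<^sub>v w = G *\<^sub>v a + hcat m (map snd LGs) *\<^sub>v d"
  proof -
    have "hcat m (map snd (LG # LGs)) = four_block_mat G (hcat m (map snd LGs)) (0\<^sub>m 0 (dim_col G)) (0\<^sub>m 0 (dim_col (hcat m (map snd LGs))))"
      by (simp only: LG list.map snd_conv hcat.simps)
    also have "dim_col (hcat m (map snd LGs)) = s" using H by blast
    finally have hb: "hcat m (map snd (LG # LGs)) = four_block_mat G (hcat m (map snd LGs)) (0\<^sub>m 0 k) (0\<^sub>m 0 s)"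
      unfolding k_def .
    have "hcat m (map snd (LG # LGs)) *\<^sub>v w = (G *\<^sub>v a + hcat m (map snd LGs) *\<^sub>v d) @\<^sub>v (0\<^sub>m 0 k *\<^sub>v a + 0\<^sub>m 0 s *\<^sub>v d)"
      unfolding hb wad by (rule four_block_mat_mult_vec[OF G H _ _ a d], auto)
    also have "\<dots> = G *\<^sub>v a + hcat m (map snd LGs) *\<^sub>v d"
      by (intro eq_vecI, insert G H a d, auto)
    finally show ?thesis .
  qed
  have zs: "z \<bullet> (G *\<^sub>v a + hcat m (map snd LGs) *\<^sub>v d) = z \<bullet> (G *\<^sub>v a) + z \<bullet> (hcat m (map snd LGs) *\<^sub>v d)"
    by (rule scalar_prod_add_distrib[of _ m], insert z G a H d, auto)
  show ?case
  proof (intro exI[of _ "a # ws"] conjI)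
    show "length (a # ws) = length (LG # LGs)" using ws by simp
    show "\<forall>i<length (LG # LGs). (a # ws) ! i \<in> carrier_vec (dim_col (snd ((LG # LGs) ! i)))"
      using ws(2) a LG k_def by (auto simp: nth_Cons split: nat.splits)
    show "(\<forall>i<length (LG # LGs). (a # ws) ! i = 0\<^sub>v (dim_col (snd ((LG # LGs) ! i)))) \<longrightarrow> w = 0\<^sub>v (sz (LG # LGs))"
    proof
      assume A: "\<forall>i<length (LG # LGs). (a # ws) ! i = 0\<^sub>v (dim_col (snd ((LG # LGs) ! i)))"
      have a0: "a = 0\<^sub>v k" using A[rule_format, of 0] LG k_def by auto
      have "\<forall>i<length LGs. ws ! i = 0\<^sub>v (dim_col (snd (LGs ! i)))" using A by auto
      hence d0: "d = 0\<^sub>v s" using ws(3) by auto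
      show "w = 0\<^sub>v (sz (LG # LGs))" unfolding wad a0 d0 using LG k_def s_def by (intro eq_vecI, auto)
    qed
    show "w \<bullet> (diag_block_mat (map fst (LG # LGs)) *\<^sub>v w) + 2 * (z \<bullet> (hcat m (map snd (LG # LGs)) *\<^sub>v w)) =
      (\<Sum>i<length (LG # LGs). (a # ws) ! i \<bullet> (fst ((LG # LGs) ! i) *\<^sub>v (a # ws) ! i) +
          2 * (z \<bullet> (snd ((LG # LGs) ! i) *\<^sub>v (a # ws) ! i)))"
      unfolding qd hc zs using ws(4) LG by (simp add: sum.lessThan_Suc_shift del: sum.lessThan_Suc) 
  qed
qed

definition KKT :: "(real mat \<times> real mat) list \<Rightarrow> nat \<Rightarrow> real \<Rightarrow> real mat" where
  "KKT LGs m c = four_block_mat (diag_block_mat (map fst LGs)) ((hcat m (map snd LGs))\<^sup>T)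
      (hcat m (map snd LGs)) (c \<cdot>\<^sub>m 1\<^sub>m m)"

lemma KKT_basic:
  assumes ok: "\<forall>LG\<in>set LGs. okp m LG"
  shows "KKT LGs m c \<in> carrier_mat (sz LGs + m) (sz LGs + m)" "(KKT LGs m c)\<^sup>T = KKT LGs m c"
    "dim_row (KKT LGs m c) = sz LGs + m"
proof -
  have D: "diag_block_mat (map fst LGs) \<in> carrier_mat (sz LGs) (sz LGs)" using diag_carrier_gen[OF ok] .
  have H: "hcat m (map snd LGs) \<in> carrier_mat m (sz LGs)" using hcat_carrier_gen[OF ok] .
  show "KKT LGs m c \<in> carrier_mat (sz LGs + m) (sz LGs + m)" unfolding KKT_def using D H by auto
  thus "dim_row (KKT LGs m c) = sz LGs + m" by auto
  have c1: "(c \<cdot>\<^sub>m 1\<^sub>m m)\<^sup>T = c \<cdot>\<^sub>m 1\<^sub>m m" by (rule eq_matI, auto)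
  show "(KKT LGs m c)\<^sup>T = KKT LGs m c" unfolding KKT_def
    by (subst transpose_four_block_mat[OF D transpose_carrier_mat[THEN iffD2, OF H] H smult_carrier_mat[OF one_carrier_mat]],
        auto simp: diag_sym_gen[OF ok] c1)
qed

lemma KKT_qf:
  assumes ok: "\<forall>LG\<in>set LGs. okp m LG" and w: "w \<in> carrier_vec (sz LGs)" and z: "z \<in> carrier_vec m"
  shows "(w @\<^sub>v z) \<bullet> (KKT LGs m c *\<^sub>v (w @\<^sub>v z)) =
    w \<bullet> (diag_block_mat (map fst LGs) *\<^sub>v w) + 2 * (z \<bullet> (hcat m (map snd LGs) *\<^sub>v w)) + c * (z \<bullet> z)"
proof -
  have D: "diag_block_mat (map fst LGs) \<in> carrier_mat (sz LGs) (sz LGs)" using diag_carrier_gen[OF ok] .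
  have H: "hcat m (map snd LGs) \<in> carrier_mat m (sz LGs)" using hcat_carrier_gen[OF ok] .
  have 1: "w \<bullet> ((hcat m (map snd LGs))\<^sup>T *\<^sub>v z) = z \<bullet> (hcat m (map snd LGs) *\<^sub>v w)"
    using transpose_vec_mult_scalar[OF H w z] comm_scalar_prod[of w "sz LGs"] H w z by auto
  have 2: "z \<bullet> ((c \<cdot>\<^sub>m 1\<^sub>m m) *\<^sub>v z) = c * (z \<bullet> z)"
    using z by (simp add: smult_mat_mult_vec[of _ m m])
  show ?thesis unfolding KKT_def
    by (subst qf_four_block[OF D _ H _ w z], insert H, auto simp: 1 2)
qed

lemma split_vec_sum: "x \<in> carrier_vec (a + b) \<Longrightarrow> x = vec_first x a @\<^sub>v vec_last x b"
  by simp

lemma KKT_main: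
  assumes ok: "\<forall>LG\<in>set LGs. okp m LG" and mu: "\<mu> > 0" and c: "c = real (length LGs) / \<mu>"
    and ge: "\<forall>LG\<in>set LGs. \<forall>z\<in>carrier_vec m. \<forall>v\<in>carrier_vec (dim_col (snd LG)).
        v \<bullet> (fst LG *\<^sub>v v) + 2 * (z \<bullet> (snd LG *\<^sub>v v)) \<ge> - (z \<bullet> z) / \<mu>"
    and x: "x \<in> carrier_vec (sz LGs + m)"
  shows "x \<bullet> (KKT LGs m c *\<^sub>v x) \<ge> 0"
    and "(\<forall>LG\<in>set LGs. \<forall>z\<in>carrier_vec m. \<forall>v\<in>carrier_vec (dim_col (snd LG)).
        v \<bullet> (fst LG *\<^sub>v v) + 2 * (z \<bullet> (snd LG *\<^sub>v v)) = - (z \<bullet> z) / \<mu> \<longrightarrow> z = 0\<^sub>v m \<longrightarrow> v = 0\<^sub>v (dim_col (snd LG)))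
      \<Longrightarrow> (m = 0 \<or> (\<exists>LG\<in>set LGs. \<forall>z\<in>carrier_vec m. \<forall>v\<in>carrier_vec (dim_col (snd LG)).
        v \<bullet> (fst LG *\<^sub>v v) + 2 * (z \<bullet> (snd LG *\<^sub>v v)) = - (z \<bullet> z) / \<mu> \<longrightarrow> z = 0\<^sub>v m))
      \<Longrightarrow> x \<noteq> 0\<^sub>v (sz LGs + m) \<Longrightarrow> x \<bullet> (KKT LGs m c *\<^sub>v x) > 0"
proof -
  define w where "w = vec_first x (sz LGs)"
  define z where "z = vec_last x m"
  have w: "w \<in> carrier_vec (sz LGs)" and z: "z \<in> carrier_vec m" unfolding w_def z_def by auto
  have xwz: "x = w @\<^sub>v z" unfolding w_def z_def using x by simp
  obtain ws where ws: "length ws = length LGs" "\<forall>i<length LGs. ws ! i \<in> carrier_vec (dim_col (snd (LGs ! i)))"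
    "(\<forall>i<length LGs. ws ! i = 0\<^sub>v (dim_col (snd (LGs ! i)))) \<longrightarrow> w = 0\<^sub>v (sz LGs)"
    "w \<bullet> (diag_block_mat (map fst LGs) *\<^sub>v w) + 2 * (z \<bullet> (hcat m (map snd LGs) *\<^sub>v w)) =
      (\<Sum>i<length LGs. ws ! i \<bullet> (fst (LGs ! i) *\<^sub>v ws ! i) + 2 * (z \<bullet> (snd (LGs ! i) *\<^sub>v ws ! i)))"
    using decomp_gen[OF ok z w] by blast
  define t where "t i = ws ! i \<bullet> (fst (LGs ! i) *\<^sub>v ws ! i) + 2 * (z \<bullet> (snd (LGs ! i) *\<^sub>v ws ! i)) + (z \<bullet> z) / \<mu>" for i
  have tnn: "t i \<ge> 0" if "i < length LGs" for i
    using ge[rule_format, OF nth_mem[OF that] z ws(2)[rule_format, OF that]] unfolding t_def by simp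
  have eq: "x \<bullet> (KKT LGs m c *\<^sub>v x) = (\<Sum>i<length LGs. t i)"
  proof -
    have "x \<bullet> (KKT LGs m c *\<^sub>v x) = (\<Sum>i<length LGs. ws ! i \<bullet> (fst (LGs ! i) *\<^sub>v ws ! i) + 2 * (z \<bullet> (snd (LGs ! i) *\<^sub>v ws ! i))) + c * (z \<bullet> z)"
      unfolding xwz KKT_qf[OF ok w z] ws(4) ..
    also have "c * (z \<bullet> z) = (\<Sum>i<length LGs. (z \<bullet> z) / \<mu>)" unfolding c by simp
    finally show ?thesis unfolding t_def by (simp add: sum.distrib)
  qed
  show "x \<bullet> (KKT LGs m c *\<^sub>v x) \<ge> 0" unfolding eq by (rule sum_nonneg, insert tnn, auto)
  assume weak: "\<forall>LG\<in>set LGs. \<forall>z\<in>carrier_vec m. \<forall>v\<in>carrier_vec (dim_col (snd LG)).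
        v \<bullet> (fst LG *\<^sub>v v) + 2 * (z \<bullet> (snd LG *\<^sub>v v)) = - (z \<bullet> z) / \<mu> \<longrightarrow> z = 0\<^sub>v m \<longrightarrow> v = 0\<^sub>v (dim_col (snd LG))"
    and strong: "m = 0 \<or> (\<exists>LG\<in>set LGs. \<forall>z\<in>carrier_vec m. \<forall>v\<in>carrier_vec (dim_col (snd LG)).
        v \<bullet> (fst LG *\<^sub>v v) + 2 * (z \<bullet> (snd LG *\<^sub>v v)) = - (z \<bullet> z) / \<mu> \<longrightarrow> z = 0\<^sub>v m)"
    and x0: "x \<noteq> 0\<^sub>v (sz LGs + m)"
  show "x \<bullet> (KKT LGs m c *\<^sub>v x) > 0"
  proof (rule ccontr)
    assume "\<not> ?thesis"
    hence "(\<Sum>i<length LGs. t i) = 0" using eq sum_nonneg[of "{..<length LGs}" t] tnn by force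
    hence t0: "t i = 0" if "i < length LGs" for i
      using sum_nonneg_eq_0_iff[of "{..<length LGs}" t] tnn that by auto
    have teq: "ws ! i \<bullet> (fst (LGs ! i) *\<^sub>v ws ! i) + 2 * (z \<bullet> (snd (LGs ! i) *\<^sub>v ws ! i)) = - (z \<bullet> z) / \<mu>"
      if "i < length LGs" for i using t0[OF that] unfolding t_def by simp
    have z0: "z = 0\<^sub>v m"
    proof (cases "m = 0")
      case True thus ?thesis using z by (intro eq_vecI, auto)
    next
      case False
      then obtain LG where LG: "LG \<in> set LGs" and st: "\<forall>z\<in>carrier_vec m. \<forall>v\<in>carrier_vec (dim_col (snd LG)).
        v \<bullet> (fst LG *\<^sub>v v) + 2 * (z \<bullet> (snd LG *\<^sub>v v)) = - (z \<bullet> z) / \<mu> \<longrightarrow> z = 0\<^sub>v m" using strong by auto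
      from LG obtain i where i: "i < length LGs" "LGs ! i = LG" by (auto simp: in_set_conv_nth)
      have c: "ws ! i \<in> carrier_vec (dim_col (snd LG))" using ws(2) i by auto
      have "ws ! i \<bullet> (fst LG *\<^sub>v ws ! i) + 2 * (z \<bullet> (snd LG *\<^sub>v ws ! i)) = - (z \<bullet> z) / \<mu>"
        using teq[OF i(1)] i(2) by simp
      thus ?thesis using st c z by blast
    qed
    have "ws ! i = 0\<^sub>v (dim_col (snd (LGs ! i)))" if "i < length LGs" for i
      using weak[rule_format, OF nth_mem[OF that] z ws(2)[rule_format, OF that] teq[OF that] z0] .
    hence "w = 0\<^sub>v (sz LGs)" using ws(3) by auto
    hence "x = 0\<^sub>v (sz LGs + m)" unfolding xwz z0 by (intro eq_vecI, auto)
    thus False using x0 by simp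
  qed
qed

lemma KKT_psd:
  assumes ok: "\<forall>LG\<in>set LGs. okp m LG" and mu: "\<mu> > 0" and c: "c = real (length LGs) / \<mu>"
    and ge: "\<forall>LG\<in>set LGs. \<forall>z\<in>carrier_vec m. \<forall>v\<in>carrier_vec (dim_col (snd LG)).
        v \<bullet> (fst LG *\<^sub>v v) + 2 * (z \<bullet> (snd LG *\<^sub>v v)) \<ge> - (z \<bullet> z) / \<mu>"
  shows "psd (KKT LGs m c)"
  unfolding psd_def using KKT_basic[OF ok] KKT_main(1)[OF ok mu c ge] by auto

lemma KKT_pd:
  assumes ok: "\<forall>LG\<in>set LGs. okp m LG" and mu: "\<mu> > 0" and c: "c = real (length LGs) / \<mu>"
    and ge: "\<forall>LG\<in>set LGs. \<forall>z\<in>carrier_vec m. \<forall>v\<in>carrier_vec (dim_col (snd LG)).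
        v \<bullet> (fst LG *\<^sub>v v) + 2 * (z \<bullet> (snd LG *\<^sub>v v)) \<ge> - (z \<bullet> z) / \<mu>"
    and weak: "\<forall>LG\<in>set LGs. \<forall>z\<in>carrier_vec m. \<forall>v\<in>carrier_vec (dim_col (snd LG)).
        v \<bullet> (fst LG *\<^sub>v v) + 2 * (z \<bullet> (snd LG *\<^sub>v v)) = - (z \<bullet> z) / \<mu> \<longrightarrow> z = 0\<^sub>v m \<longrightarrow> v = 0\<^sub>v (dim_col (snd LG))"
    and strong: "m = 0 \<or> (\<exists>LG\<in>set LGs. \<forall>z\<in>carrier_vec m. \<forall>v\<in>carrier_vec (dim_col (snd LG)).
        v \<bullet> (fst LG *\<^sub>v v) + 2 * (z \<bullet> (snd LG *\<^sub>v v)) = - (z \<bullet> z) / \<mu> \<longrightarrow> z = 0\<^sub>v m)"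
  shows "pd (KKT LGs m c)"
  unfolding pd_def using KKT_basic[OF ok] KKT_main(2)[OF ok mu c ge _ weak strong] by auto

lemma self_sprod_nonneg: "(v :: real vec) \<bullet> v \<ge> 0"
  unfolding scalar_prod_def by (auto intro!: sum_nonneg)

lemma self_sprod_zero: assumes "(v :: real vec) \<in> carrier_vec k" "v \<bullet> v = 0" shows "v = 0\<^sub>v k"
proof (rule eq_vecI)
  have "\<forall>i\<in>{0..<dim_vec v}. v $ i * v $ i = 0"
    using assms(2) unfolding scalar_prod_def by (subst sum_nonneg_eq_0_iff[symmetric], auto)
  thus "\<And>i. i < dim_vec (0\<^sub>v k) \<Longrightarrow> v $ i = 0\<^sub>v k $ i" using assms(1) by auto
qed (insert assms, auto)

lemma mat_mult_zero_vec: "G \<in> carrier_mat m k \<Longrightarrow> G *\<^sub>v 0\<^sub>v k = (0\<^sub>v m :: 'a :: comm_ring vec)"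
  by (intro eq_vecI, auto simp: scalar_prod_def)

lemma sq_expand:
  assumes g: "g \<in> carrier_vec m" and z: "z \<in> carrier_vec m"
  shows "(\<mu> \<cdot>\<^sub>v g + z) \<bullet> (\<mu> \<cdot>\<^sub>v g + z) = \<mu>^2 * (g \<bullet> g) + 2 * \<mu> * (z \<bullet> g) + z \<bullet> (z :: real vec)"
proof -
  have gz: "g \<bullet> z = z \<bullet> g" using comm_scalar_prod[OF g z] .
  have "(\<mu> \<cdot>\<^sub>v g + z) \<bullet> (\<mu> \<cdot>\<^sub>v g + z) = (\<mu> \<cdot>\<^sub>v g) \<bullet> (\<mu> \<cdot>\<^sub>v g + z) + z \<bullet> (\<mu> \<cdot>\<^sub>v g + z)"
    by (rule add_scalar_prod_distrib[of _ m], insert g z, auto)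
  also have "\<dots> = (\<mu> \<cdot>\<^sub>v g) \<bullet> (\<mu> \<cdot>\<^sub>v g) + (\<mu> \<cdot>\<^sub>v g) \<bullet> z + (z \<bullet> (\<mu> \<cdot>\<^sub>v g) + z \<bullet> z)"
    by (subst scalar_prod_add_distrib[of _ m], insert g z, auto,
        subst scalar_prod_add_distrib[of _ m], insert g z, auto)
  also have "\<dots> = \<mu>^2 * (g \<bullet> g) + 2 * \<mu> * (z \<bullet> g) + z \<bullet> z"
    using g z gz by (simp add: power2_eq_square algebra_simps)
  finally show ?thesis .
qed

lemma core_ineq:
  assumes g: "g \<in> carrier_vec m" and z: "z \<in> carrier_vec m" and mu: "(\<mu>::real) > 0"
  shows "\<mu> * (g \<bullet> g) + 2 * (z \<bullet> g) \<ge> - (z \<bullet> z) / \<mu>"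
    and "\<mu> * (g \<bullet> g) + 2 * (z \<bullet> g) = - (z \<bullet> z) / \<mu> \<Longrightarrow> \<mu> \<cdot>\<^sub>v g + z = 0\<^sub>v m"
proof -
  have e: "(\<mu> \<cdot>\<^sub>v g + z) \<bullet> (\<mu> \<cdot>\<^sub>v g + z) = \<mu> * (\<mu> * (g \<bullet> g) + 2 * (z \<bullet> g) + (z \<bullet> z) / \<mu>)"
    unfolding sq_expand[OF g z] using mu by (simp add: field_simps power2_eq_square)
  have "\<mu> * (\<mu> * (g \<bullet> g) + 2 * (z \<bullet> g) + (z \<bullet> z) / \<mu>) \<ge> 0" using e self_sprod_nonneg by metis
  hence "\<mu> * (g \<bullet> g) + 2 * (z \<bullet> g) + (z \<bullet> z) / \<mu> \<ge> 0" using mu by (simp add: zero_le_mult_iff)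
  thus "\<mu> * (g \<bullet> g) + 2 * (z \<bullet> g) \<ge> - (z \<bullet> z) / \<mu>" by simp
  assume "\<mu> * (g \<bullet> g) + 2 * (z \<bullet> g) = - (z \<bullet> z) / \<mu>"
  hence "(\<mu> \<cdot>\<^sub>v g + z) \<bullet> (\<mu> \<cdot>\<^sub>v g + z) = 0" unfolding e by simp
  thus "\<mu> \<cdot>\<^sub>v g + z = 0\<^sub>v m" by (rule self_sprod_zero[rotated], insert g z, auto)
qed

lemma gram_qf:
  assumes G: "G \<in> carrier_mat m k" and v: "v \<in> carrier_vec k"
  shows "v \<bullet> ((\<mu> \<cdot>\<^sub>m (G\<^sup>T * G)) *\<^sub>v v) = \<mu> * ((G *\<^sub>v v) \<bullet> (G *\<^sub>v (v :: real vec)))"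
proof -
  have "(\<mu> \<cdot>\<^sub>m (G\<^sup>T * G)) *\<^sub>v v = \<mu> \<cdot>\<^sub>v (G\<^sup>T *\<^sub>v (G *\<^sub>v v))"
    using G v by (simp add: smult_mat_mult_vec[of _ k k])
  moreover have "v \<bullet> (G\<^sup>T *\<^sub>v (G *\<^sub>v v)) = (G *\<^sub>v v) \<bullet> (G *\<^sub>v v)"
    using transpose_vec_mult_scalar[of "G\<^sup>T" k m "G *\<^sub>v v" v] G v by simp
  ultimately show ?thesis using G v by simp
qed

lemma gram_sym: "G \<in> carrier_mat m k \<Longrightarrow> (\<mu> \<cdot>\<^sub>m (G\<^sup>T * G))\<^sup>T = \<mu> \<cdot>\<^sub>m (G\<^sup>T * (G :: real mat))"
  by (rule eq_matI, auto simp: comm_scalar_prod[of _ m])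

lemma pairA:
  assumes G: "G \<in> carrier_mat m k" and mu: "\<mu> > 0"
  shows "okp m (\<mu> \<cdot>\<^sub>m (G\<^sup>T * G), G)"
    "\<forall>z\<in>carrier_vec m. \<forall>v\<in>carrier_vec k.
        v \<bullet> ((\<mu> \<cdot>\<^sub>m (G\<^sup>T * G)) *\<^sub>v v) + 2 * (z \<bullet> (G *\<^sub>v v)) \<ge> - (z \<bullet> z) / \<mu>"
proof -
  show "okp m (\<mu> \<cdot>\<^sub>m (G\<^sup>T * G), G)" unfolding okp_def using G gram_sym[OF G] by auto
  show "\<forall>z\<in>carrier_vec m. \<forall>v\<in>carrier_vec k.
        v \<bullet> ((\<mu> \<cdot>\<^sub>m (G\<^sup>T * G)) *\<^sub>v v) + 2 * (z \<bullet> (G *\<^sub>v v)) \<ge> - (z \<bullet> z) / \<mu>"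
  proof (intro ballI)
    fix z v :: "real vec" assume z: "z \<in> carrier_vec m" and v: "v \<in> carrier_vec k"
    show "v \<bullet> ((\<mu> \<cdot>\<^sub>m (G\<^sup>T * G)) *\<^sub>v v) + 2 * (z \<bullet> (G *\<^sub>v v)) \<ge> - (z \<bullet> z) / \<mu>"
      using gram_qf[OF G v] core_ineq(1)[OF mult_mat_vec_carrier[OF G v] z mu] by simp
  qed
qed

lemma pairI:
  assumes mu: "\<mu> > 0"
  shows "okp m (\<mu> \<cdot>\<^sub>m 1\<^sub>m m, - 1\<^sub>m m)"
    "\<forall>z\<in>carrier_vec m. \<forall>v\<in>carrier_vec m.
        v \<bullet> ((\<mu> \<cdot>\<^sub>m 1\<^sub>m m) *\<^sub>v v) + 2 * (z \<bullet> ((- 1\<^sub>m m) *\<^sub>v v)) \<ge> - (z \<bullet> z) / \<mu>"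
    "\<forall>z\<in>carrier_vec m. \<forall>v\<in>carrier_vec m.
        v \<bullet> ((\<mu> \<cdot>\<^sub>m 1\<^sub>m m) *\<^sub>v v) + 2 * (z \<bullet> ((- 1\<^sub>m m) *\<^sub>v v)) = - (z \<bullet> z) / \<mu> \<longrightarrow> z = 0\<^sub>v m \<longrightarrow> v = 0\<^sub>v m"
proof -
  show "okp m (\<mu> \<cdot>\<^sub>m 1\<^sub>m m, - 1\<^sub>m m)" unfolding okp_def by (auto intro!: eq_matI)
  have e: "v \<bullet> ((\<mu> \<cdot>\<^sub>m 1\<^sub>m m) *\<^sub>v v) + 2 * (z \<bullet> ((- 1\<^sub>m m) *\<^sub>v v)) = \<mu> * ((- v) \<bullet> (- v)) + 2 * (z \<bullet> (- v))"
    if "v \<in> carrier_vec m" "z \<in> carrier_vec m" for v z :: "real vec"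
    using that by (simp add: smult_mat_mult_vec[of _ m m])
  show "\<forall>z\<in>carrier_vec m. \<forall>v\<in>carrier_vec m.
        v \<bullet> ((\<mu> \<cdot>\<^sub>m 1\<^sub>m m) *\<^sub>v v) + 2 * (z \<bullet> ((- 1\<^sub>m m) *\<^sub>v v)) \<ge> - (z \<bullet> z) / \<mu>"
    using e core_ineq(1)[OF _ _ mu] by (metis uminus_carrier_vec)
  show "\<forall>z\<in>carrier_vec m. \<forall>v\<in>carrier_vec m.
        v \<bullet> ((\<mu> \<cdot>\<^sub>m 1\<^sub>m m) *\<^sub>v v) + 2 * (z \<bullet> ((- 1\<^sub>m m) *\<^sub>v v)) = - (z \<bullet> z) / \<mu> \<longrightarrow> z = 0\<^sub>v m \<longrightarrow> v = 0\<^sub>v m"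
  proof (intro ballI impI)
    fix z v :: "real vec" assume z: "z \<in> carrier_vec m" and v: "v \<in> carrier_vec m"
      and eq: "v \<bullet> ((\<mu> \<cdot>\<^sub>m 1\<^sub>m m) *\<^sub>v v) + 2 * (z \<bullet> ((- 1\<^sub>m m) *\<^sub>v v)) = - (z \<bullet> z) / \<mu>"
      and z0: "z = 0\<^sub>v m"
    have "\<mu> * (v \<bullet> v) = 0" using eq z0 v by (simp add: smult_mat_mult_vec[of _ m m])
    hence "v \<bullet> v = 0" using mu by simp
    thus "v = 0\<^sub>v m" using self_sprod_zero v by blast
  qed
qed

lemma spec_bound:
  assumes B: "B \<in> carrier_mat k k" and sym: "B\<^sup>T = B" and ev: "\<forall>e. eigenvalue B e \<longrightarrow> e < \<eta>"
    and v: "v \<in> carrier_vec k" "v \<noteq> 0\<^sub>v k"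
  shows "v \<bullet> (B *\<^sub>v v) < \<eta> * (v \<bullet> (v :: real vec))"
proof -
  define C where "C = \<eta> \<cdot>\<^sub>m 1\<^sub>m k - B"
  have C: "C \<in> carrier_mat k k" unfolding C_def using B by auto
  have Csym: "C\<^sup>T = C" unfolding C_def using B sym
    by (intro eq_matI, auto, metis index_transpose_mat(1) carrier_matD)
  have Cpos: "\<forall>e. eigenvalue C e \<longrightarrow> e > 0"
  proof (intro allI impI)
    fix e assume "eigenvalue C e"
    then obtain w where w: "w \<in> carrier_vec k" "w \<noteq> 0\<^sub>v k" "C *\<^sub>v w = e \<cdot>\<^sub>v w"
      using C unfolding eigenvalue_def eigenvector_def by auto
    have "C *\<^sub>v w = \<eta> \<cdot>\<^sub>v w - B *\<^sub>v w" unfolding C_def using B w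
      by (simp add: minus_mult_distrib_mat_vec[of _ k k] smult_mat_mult_vec[of _ k k])
    hence h: "e \<cdot>\<^sub>v w = \<eta> \<cdot>\<^sub>v w - B *\<^sub>v w" using w(3) by simp
    have "B *\<^sub>v w = (\<eta> - e) \<cdot>\<^sub>v w"
    proof (rule eq_vecI)
      fix i assume i: "i < dim_vec ((\<eta> - e) \<cdot>\<^sub>v w)"
      have "(e \<cdot>\<^sub>v w) $ i = (\<eta> \<cdot>\<^sub>v w - B *\<^sub>v w) $ i" using h by simp
      thus "(B *\<^sub>v w) $ i = ((\<eta> - e) \<cdot>\<^sub>v w) $ i" using i w B by (simp add: algebra_simps)
    qed (insert B w, auto)
    hence "eigenvalue B (\<eta> - e)" unfolding eigenvalue_def eigenvector_def using w B by auto
    thus "e > 0" using ev by force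
  qed
  have "v \<bullet> (C *\<^sub>v v) > 0" by (rule sym_pos_eig_pd[OF C Csym Cpos v])
  moreover have "v \<bullet> (C *\<^sub>v v) = \<eta> * (v \<bullet> v) - v \<bullet> (B *\<^sub>v v)" unfolding C_def using B v
    by (simp add: minus_mult_distrib_mat_vec[of _ k k] smult_mat_mult_vec[of _ k k] scalar_prod_minus_distrib[of _ k])
  ultimately show ?thesis by simp
qed

lemma pairS:
  assumes G: "G \<in> carrier_mat m k" and mu: "\<mu> > 0"
    and ev: "\<forall>e. eigenvalue (\<mu> \<cdot>\<^sub>m (G\<^sup>T * G)) e \<longrightarrow> e < \<eta>"
  shows "okp m (\<eta> \<cdot>\<^sub>m 1\<^sub>m k, G)"
    "\<forall>z\<in>carrier_vec m. \<forall>v\<in>carrier_vec k.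
        v \<bullet> ((\<eta> \<cdot>\<^sub>m 1\<^sub>m k) *\<^sub>v v) + 2 * (z \<bullet> (G *\<^sub>v v)) \<ge> - (z \<bullet> z) / \<mu>"
    "\<forall>z\<in>carrier_vec m. \<forall>v\<in>carrier_vec k.
        v \<bullet> ((\<eta> \<cdot>\<^sub>m 1\<^sub>m k) *\<^sub>v v) + 2 * (z \<bullet> (G *\<^sub>v v)) = - (z \<bullet> z) / \<mu> \<longrightarrow> z = 0\<^sub>v m \<longrightarrow> v = 0\<^sub>v k"
    "\<forall>z\<in>carrier_vec m. \<forall>v\<in>carrier_vec k.
        v \<bullet> ((\<eta> \<cdot>\<^sub>m 1\<^sub>m k) *\<^sub>v v) + 2 * (z \<bullet> (G *\<^sub>v v)) = - (z \<bullet> z) / \<mu> \<longrightarrow> z = 0\<^sub>v m"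
proof -
  show "okp m (\<eta> \<cdot>\<^sub>m 1\<^sub>m k, G)" unfolding okp_def using G by (auto intro!: eq_matI)
  have B: "\<mu> \<cdot>\<^sub>m (G\<^sup>T * G) \<in> carrier_mat k k" using G by auto
  have key: "v \<bullet> ((\<eta> \<cdot>\<^sub>m 1\<^sub>m k) *\<^sub>v v) + 2 * (z \<bullet> (G *\<^sub>v v)) \<ge> - (z \<bullet> z) / \<mu>
     \<and> (v \<bullet> ((\<eta> \<cdot>\<^sub>m 1\<^sub>m k) *\<^sub>v v) + 2 * (z \<bullet> (G *\<^sub>v v)) = - (z \<bullet> z) / \<mu> \<longrightarrow> z = 0\<^sub>v m \<and> v = 0\<^sub>v k)"
    if z: "z \<in> carrier_vec m" and v: "v \<in> carrier_vec k" for z v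
  proof -
    define g where "g = G *\<^sub>v v"
    have g: "g \<in> carrier_vec m" unfolding g_def using G v by auto
    have q: "v \<bullet> ((\<eta> \<cdot>\<^sub>m 1\<^sub>m k) *\<^sub>v v) = \<eta> * (v \<bullet> v)" using v by (simp add: smult_mat_mult_vec[of _ k k])
    have le: "\<mu> * (g \<bullet> g) \<le> \<eta> * (v \<bullet> v)" and lt: "v \<noteq> 0\<^sub>v k \<Longrightarrow> \<mu> * (g \<bullet> g) < \<eta> * (v \<bullet> v)"
    proof -
      show lt: "v \<noteq> 0\<^sub>v k \<Longrightarrow> \<mu> * (g \<bullet> g) < \<eta> * (v \<bullet> v)"
        using spec_bound[OF B gram_sym[OF G] ev v] gram_qf[OF G v] unfolding g_def by simp
      show "\<mu> * (g \<bullet> g) \<le> \<eta> * (v \<bullet> v)"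
      proof (cases "v = 0\<^sub>v k")
        case True
        have "G *\<^sub>v 0\<^sub>v k = 0\<^sub>v m" using G by (intro eq_vecI, auto)
        thus ?thesis unfolding g_def using True by simp
      qed (use lt in auto)
    qed
    have c: "\<mu> * (g \<bullet> g) + 2 * (z \<bullet> g) \<ge> - (z \<bullet> z) / \<mu>" using core_ineq(1)[OF g z mu] .
    show ?thesis
    proof (intro conjI impI)
      show "v \<bullet> ((\<eta> \<cdot>\<^sub>m 1\<^sub>m k) *\<^sub>v v) + 2 * (z \<bullet> (G *\<^sub>v v)) \<ge> - (z \<bullet> z) / \<mu>"
        unfolding q g_def[symmetric] using le c by linarith
      assume eq: "v \<bullet> ((\<eta> \<cdot>\<^sub>m 1\<^sub>m k) *\<^sub>v v) + 2 * (z \<bullet> (G *\<^sub>v v)) = - (z \<bullet> z) / \<mu>"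
      show v0: "v = 0\<^sub>v k"
      proof (rule ccontr)
        assume "v \<noteq> 0\<^sub>v k"
        from lt[OF this] c eq show False unfolding q g_def[symmetric] by linarith
      qed
      have "- (z \<bullet> z) / \<mu> = 0" using eq[symmetric] v0 G z unfolding q by (simp add: mat_mult_zero_vec)
      hence "z \<bullet> z = 0" using mu by simp
      thus "z = 0\<^sub>v m" using self_sprod_zero z by blast
    qed
  qed
  show "\<forall>z\<in>carrier_vec m. \<forall>v\<in>carrier_vec k.
        v \<bullet> ((\<eta> \<cdot>\<^sub>m 1\<^sub>m k) *\<^sub>v v) + 2 * (z \<bullet> (G *\<^sub>v v)) \<ge> - (z \<bullet> z) / \<mu>" using key by blast
  show "\<forall>z\<in>carrier_vec m. \<forall>v\<in>carrier_vec k.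
        v \<bullet> ((\<eta> \<cdot>\<^sub>m 1\<^sub>m k) *\<^sub>v v) + 2 * (z \<bullet> (G *\<^sub>v v)) = - (z \<bullet> z) / \<mu> \<longrightarrow> z = 0\<^sub>v m \<longrightarrow> v = 0\<^sub>v k"
    using key by blast
  show "\<forall>z\<in>carrier_vec m. \<forall>v\<in>carrier_vec k.
        v \<bullet> ((\<eta> \<cdot>\<^sub>m 1\<^sub>m k) *\<^sub>v v) + 2 * (z \<bullet> (G *\<^sub>v v)) = - (z \<bullet> z) / \<mu> \<longrightarrow> z = 0\<^sub>v m"
    using key by blast
qed

lemma hcat_carrier_rows:
  "\<forall>X\<in>set Xs. dim_row X = n \<Longrightarrow> hcat n Xs \<in> carrier_mat n (sum_list (map dim_col Xs))"
proof (induction Xs)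
  case Nil thus ?case by simp
next
  case (Cons X Xs)
  have G: "X \<in> carrier_mat n (dim_col X)" using Cons.prems by auto
  have H: "hcat n Xs \<in> carrier_mat n (sum_list (map dim_col Xs))" using Cons by simp
  have "four_block_mat X (hcat n Xs) (0\<^sub>m 0 (dim_col X)) (0\<^sub>m 0 (dim_col (hcat n Xs)))
     \<in> carrier_mat (n + 0) (dim_col X + sum_list (map dim_col Xs))"
    by (rule four_block_carrier_mat[OF G], insert H, auto)
  thus ?case by simp
qed

lemma block3_KKT:
  assumes L1: "L1 \<in> carrier_mat p p" and L2: "L2 \<in> carrier_mat p p"
    and G1: "G1 \<in> carrier_mat p p" and G2: "G2 \<in> carrier_mat p p"
  shows "block3 L1 (0\<^sub>m p p) (G1\<^sup>T) (0\<^sub>m p p) L2 (G2\<^sup>T) G1 G2 (c \<cdot>\<^sub>m 1\<^sub>m p) = KKT [(L1,G1),(L2,G2)] p c"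
proof -
  have d: "diag_block_mat [L1, L2] = four_block_mat L1 (0\<^sub>m p p) (0\<^sub>m p p) L2"
    using L1 L2 by (intro eq_matI, auto simp: Let_def)
  have h: "hcat p [G1, G2] = hcat2 G1 G2"
    using G1 G2 unfolding hcat2_def by (intro eq_matI, auto)
  have t: "(hcat2 G1 G2)\<^sup>T = vcat2 (G1\<^sup>T) (G2\<^sup>T)"
    using G1 G2 unfolding hcat2_def vcat2_def by (intro eq_matI, auto)
  show ?thesis unfolding KKT_def block3_def using d h t by simp
qed

context
  fixes n :: nat and Xs :: "real mat list"
  assumes rows: "\<forall>Xi \<in> set Xs. dim_row Xi = n"
begin

lemma X_carrier: "Xmat n Xs \<in> carrier_mat n (pdim n Xs)"
  using hcat_carrier_rows[OF rows] unfolding Xmat_def pdim_def by auto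

lemma A_carrier: "Amat n Xs \<in> carrier_mat (pdim n Xs) (pdim n Xs)"
  using X_carrier unfolding Amat_def by auto

lemma Ablock_carrier: "i < length Xs \<Longrightarrow> Ablocks n Xs ! i \<in> carrier_mat (pdim n Xs) (dim_col (Ablocks n Xs ! i))"
  using X_carrier rows unfolding Ablocks_def by auto

lemma length_Ablocks[simp]: "length (Ablocks n Xs) = length Xs"
  unfolding Ablocks_def by simp

lemma pdim_Nil: "Xs = [] \<Longrightarrow> pdim n Xs = 0"
  unfolding pdim_def Xmat_def by simp

end

lemma set_map_zip_all:
  assumes "length ys = length xs" "\<And>i. i < length xs \<Longrightarrow> P (f (xs ! i, ys ! i))"
  shows "\<forall>LG\<in>set (map f (zip xs ys)). P LG"
  using assms by (auto simp: set_zip)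

lemma Ablock_set: "\<forall>Xi \<in> set Xs. dim_row Xi = n \<Longrightarrow> Ai \<in> set (Ablocks n Xs) \<Longrightarrow>
   Ai \<in> carrier_mat (pdim n Xs) (dim_col Ai)"
proof -
  assume rows: "\<forall>Xi \<in> set Xs. dim_row Xi = n" and "Ai \<in> set (Ablocks n Xs)"
  then obtain x where x: "x \<in> set Xs" "Ai = (Xmat n Xs)\<^sup>T * x" unfolding Ablocks_def by auto
  have xc: "x \<in> carrier_mat n (dim_col x)" using rows x(1) by (intro carrier_matI) auto
  have "(Xmat n Xs)\<^sup>T \<in> carrier_mat (pdim n Xs) n" using X_carrier[OF rows] by simp
  from mult_carrier_mat[OF this xc] have "Ai \<in> carrier_mat (pdim n Xs) (dim_col x)" unfolding x(2)[symmetric] .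
  moreover hence "dim_col Ai = dim_col x" by blast
  ultimately show ?thesis by simp
qed

theorem proposition1:
  fixes n :: nat and Xs :: "real mat list" and \<mu> \<eta> :: real and \<eta>s :: "real list"
  assumes rows: "\<forall>Xi \<in> set Xs. dim_row Xi = n"
    and mu_pos: "\<mu> > 0"
    and eta: "\<forall>e. eigenvalue (\<mu> \<cdot>\<^sub>m ((Amat n Xs)\<^sup>T * Amat n Xs)) e \<longrightarrow> e < \<eta>"
    and len: "length \<eta>s = length Xs"
    and etas: "\<forall>i < length Xs. \<forall>e.
       eigenvalue (\<mu> \<cdot>\<^sub>m ((Ablocks n Xs ! i)\<^sup>T * (Ablocks n Xs ! i))) e \<longrightarrow> e < \<eta>s ! i"
  shows "psd (Mmat n Xs \<mu>) \<and> psd (MKmat n Xs \<mu>) \<and> pd (Hmat n Xs \<mu> \<eta>) \<and> pd (HKmat n Xs \<mu> \<eta>s)"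
proof -
  define p where "p = pdim n Xs"
  define A where "A = Amat n Xs"
  have A: "A \<in> carrier_mat p p" using A_carrier[OF rows] unfolding A_def p_def .
  have m1: "(- 1\<^sub>m p)\<^sup>T = (- 1\<^sub>m p :: real mat)" by (simp add: transpose_uminus)
  have one: "1\<^sub>m p \<in> carrier_mat p p" "- 1\<^sub>m p \<in> carrier_mat p p" by auto
  note pI = pairI[OF mu_pos, of p]
  have Meq: "Mmat n Xs \<mu> = KKT [(\<mu> \<cdot>\<^sub>m (A\<^sup>T * A), A), (\<mu> \<cdot>\<^sub>m 1\<^sub>m p, - 1\<^sub>m p)] p (2 / \<mu>)"
  proof -
    have "block3 (\<mu> \<cdot>\<^sub>m (A\<^sup>T * A)) (0\<^sub>m p p) (A\<^sup>T) (0\<^sub>m p p) (\<mu> \<cdot>\<^sub>m 1\<^sub>m p) ((- 1\<^sub>m p)\<^sup>T) A (- 1\<^sub>m p) ((2 / \<mu>) \<cdot>\<^sub>m 1\<^sub>m p)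
       = KKT [(\<mu> \<cdot>\<^sub>m (A\<^sup>T * A), A), (\<mu> \<cdot>\<^sub>m 1\<^sub>m p, - 1\<^sub>m p)] p (2 / \<mu>)"
      by (rule block3_KKT, insert A, auto)
    thus ?thesis unfolding Mmat_def Let_def p_def[symmetric] A_def[symmetric] m1 .
  qed
  have psdM: "psd (Mmat n Xs \<mu>)" unfolding Meq
    by (rule KKT_psd[OF _ mu_pos], insert pairA[OF A mu_pos] pI A, auto)
  have L1: "\<mu> \<cdot>\<^sub>m (A\<^sup>T * A) + Smat n Xs \<mu> \<eta> = \<eta> \<cdot>\<^sub>m 1\<^sub>m p"
    unfolding Smat_def A_def[symmetric] p_def[symmetric] using A by (intro eq_matI, auto)
  have Heq: "Hmat n Xs \<mu> \<eta> = KKT [(\<eta> \<cdot>\<^sub>m 1\<^sub>m p, A), (\<mu> \<cdot>\<^sub>m 1\<^sub>m p, - 1\<^sub>m p)] p (2 / \<mu>)"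
  proof -
    have "block3 (\<eta> \<cdot>\<^sub>m 1\<^sub>m p) (0\<^sub>m p p) (A\<^sup>T) (0\<^sub>m p p) (\<mu> \<cdot>\<^sub>m 1\<^sub>m p) ((- 1\<^sub>m p)\<^sup>T) A (- 1\<^sub>m p) ((2 / \<mu>) \<cdot>\<^sub>m 1\<^sub>m p)
       = KKT [(\<eta> \<cdot>\<^sub>m 1\<^sub>m p, A), (\<mu> \<cdot>\<^sub>m 1\<^sub>m p, - 1\<^sub>m p)] p (2 / \<mu>)"
      by (rule block3_KKT, insert A, auto)
    thus ?thesis unfolding Hmat_def Let_def p_def[symmetric] A_def[symmetric] m1 L1 .
  qed
  note pS = pairS[OF A mu_pos eta[folded A_def]]
  have dA: "dim_col A = p" using A by simp
  have dI: "dim_col (- 1\<^sub>m p :: real mat) = p" by simp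
  have pdH: "pd (Hmat n Xs \<mu> \<eta>)" unfolding Heq
  proof (rule KKT_pd[OF _ mu_pos])
    show "2 / \<mu> = real (length [(\<eta> \<cdot>\<^sub>m 1\<^sub>m p, A), (\<mu> \<cdot>\<^sub>m 1\<^sub>m p, - 1\<^sub>m p)]) / \<mu>" by simp
    show "\<forall>LG\<in>set [(\<eta> \<cdot>\<^sub>m 1\<^sub>m p, A), (\<mu> \<cdot>\<^sub>m 1\<^sub>m p, - 1\<^sub>m p)]. okp p LG"
      using pS(1) pI(1) by simp
    show "\<forall>LG\<in>set [(\<eta> \<cdot>\<^sub>m 1\<^sub>m p, A), (\<mu> \<cdot>\<^sub>m 1\<^sub>m p, - 1\<^sub>m p)]. \<forall>z\<in>carrier_vec p. \<forall>v\<in>carrier_vec (dim_col (snd LG)).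
        - (z \<bullet> z) / \<mu> \<le> v \<bullet> (fst LG *\<^sub>v v) + 2 * (z \<bullet> (snd LG *\<^sub>v v))"
      using pS(2) pI(2) unfolding list.set by (simp only: ball_simps(5,7) bex_simps(3,5) dA dI fst_conv snd_conv simp_thms; blast)
    show "\<forall>LG\<in>set [(\<eta> \<cdot>\<^sub>m 1\<^sub>m p, A), (\<mu> \<cdot>\<^sub>m 1\<^sub>m p, - 1\<^sub>m p)]. \<forall>z\<in>carrier_vec p. \<forall>v\<in>carrier_vec (dim_col (snd LG)).
        v \<bullet> (fst LG *\<^sub>v v) + 2 * (z \<bullet> (snd LG *\<^sub>v v)) = - (z \<bullet> z) / \<mu> \<longrightarrow> z = 0\<^sub>v p \<longrightarrow> v = 0\<^sub>v (dim_col (snd LG))"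
      using pS(3) pI(3) unfolding list.set by (simp only: ball_simps(5,7) bex_simps(3,5) dA dI fst_conv snd_conv simp_thms; blast)
    show "p = 0 \<or> (\<exists>LG\<in>set [(\<eta> \<cdot>\<^sub>m 1\<^sub>m p, A), (\<mu> \<cdot>\<^sub>m 1\<^sub>m p, - 1\<^sub>m p)]. \<forall>z\<in>carrier_vec p. \<forall>v\<in>carrier_vec (dim_col (snd LG)).
        v \<bullet> (fst LG *\<^sub>v v) + 2 * (z \<bullet> (snd LG *\<^sub>v v)) = - (z \<bullet> z) / \<mu> \<longrightarrow> z = 0\<^sub>v p)"
      using pS(4) unfolding list.set by (simp only: ball_simps(5,7) bex_simps(3,5) dA fst_conv snd_conv simp_thms; blast)
  qed
  define LGsM where "LGsM = map (\<lambda>Ai. (\<mu> \<cdot>\<^sub>m (Ai\<^sup>T * Ai), Ai)) (Ablocks n Xs) @ [(\<mu> \<cdot>\<^sub>m 1\<^sub>m p, - 1\<^sub>m p)]"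
  have fstM: "map fst LGsM = map (\<lambda>Ai. \<mu> \<cdot>\<^sub>m (Ai\<^sup>T * Ai)) (Ablocks n Xs) @ [\<mu> \<cdot>\<^sub>m 1\<^sub>m p]"
    unfolding LGsM_def by (simp add: o_def)
  have sndM: "map snd LGsM = Ablocks n Xs @ [- 1\<^sub>m p]"
    unfolding LGsM_def by (simp add: o_def)
  have lenM: "length LGsM = length Xs + 1" unfolding LGsM_def Ablocks_def by simp
  have MKeq: "MKmat n Xs \<mu> = KKT LGsM p (real (length LGsM) / \<mu>)"
    unfolding MKmat_def Let_def LambdaK_def Gmat_def KKT_def fstM sndM lenM p_def[symmetric] ..
  have psdMK: "psd (MKmat n Xs \<mu>)" unfolding MKeq
  proof (rule KKT_psd[OF _ mu_pos refl])
    show "\<forall>LG\<in>set LGsM. okp p LG" unfolding LGsM_def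
      using pairA(1)[OF Ablock_set[OF rows] mu_pos] pI(1) p_def by auto
    show "\<forall>LG\<in>set LGsM. \<forall>z\<in>carrier_vec p. \<forall>v\<in>carrier_vec (dim_col (snd LG)).
        - (z \<bullet> z) / \<mu> \<le> v \<bullet> (fst LG *\<^sub>v v) + 2 * (z \<bullet> (snd LG *\<^sub>v v))" unfolding LGsM_def
      using pairA(2)[OF Ablock_set[OF rows] mu_pos] pI(2) p_def by auto
  qed
  define f where "f = (\<lambda>q :: real mat \<times> real. (snd q \<cdot>\<^sub>m 1\<^sub>m (dim_col (fst q)), fst q))"
  define LGsH where "LGsH = map f (zip (Ablocks n Xs) \<eta>s) @ [(\<mu> \<cdot>\<^sub>m 1\<^sub>m p, - 1\<^sub>m p)]"
  have lenH: "length LGsH = length Xs + 1" unfolding LGsH_def Ablocks_def using len by simp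
  have lamb: "map (\<lambda>(Ai, \<eta>i). \<mu> \<cdot>\<^sub>m (Ai\<^sup>T * Ai) + Sblock \<mu> \<eta>i Ai) (zip (Ablocks n Xs) \<eta>s)
      = map (fst \<circ> f) (zip (Ablocks n Xs) \<eta>s)"
    unfolding f_def by (intro map_cong refl, auto simp: Sblock_def intro!: eq_matI)
  have sndH: "map (snd \<circ> f) (zip (Ablocks n Xs) \<eta>s) = Ablocks n Xs"
  proof -
    have "length (Ablocks n Xs) = length \<eta>s" using len unfolding Ablocks_def by simp
    hence "map fst (zip (Ablocks n Xs) \<eta>s) = Ablocks n Xs" by (rule map_fst_zip)
    thus ?thesis unfolding f_def by (simp add: o_def)
  qed
  have HKeq: "HKmat n Xs \<mu> \<eta>s = KKT LGsH p (real (length LGsH) / \<mu>)"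
  proof -
    have fstH: "map fst LGsH = map (fst \<circ> f) (zip (Ablocks n Xs) \<eta>s) @ [\<mu> \<cdot>\<^sub>m 1\<^sub>m p]"
      unfolding LGsH_def by simp
    have sndH': "map snd LGsH = Ablocks n Xs @ [- 1\<^sub>m p]"
      unfolding LGsH_def map_append map_map sndH by simp
    show ?thesis
      unfolding HKmat_def Let_def LambdaK_tilde_def Gmat_def KKT_def lamb fstH sndH' lenH p_def[symmetric] ..
  qed
  have Gi: "Ablocks n Xs ! i \<in> carrier_mat p (dim_col (Ablocks n Xs ! i))" if "i < length Xs" for i
    unfolding p_def by (rule Ablock_carrier[OF rows that])
  have evi: "\<forall>e. eigenvalue (\<mu> \<cdot>\<^sub>m ((Ablocks n Xs ! i)\<^sup>T * (Ablocks n Xs ! i))) e \<longrightarrow> e < \<eta>s ! i"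
    if "i < length Xs" for i using etas that by blast
  have fi: "f (Ablocks n Xs ! i, \<eta>s ! i) = (\<eta>s ! i \<cdot>\<^sub>m 1\<^sub>m (dim_col (Ablocks n Xs ! i)), Ablocks n Xs ! i)" for i
    unfolding f_def by simp
  have allH: "\<forall>LG\<in>set LGsH. Q LG"
    if "\<And>i. i < length Xs \<Longrightarrow> Q (\<eta>s ! i \<cdot>\<^sub>m 1\<^sub>m (dim_col (Ablocks n Xs ! i)), Ablocks n Xs ! i)"
      "Q (\<mu> \<cdot>\<^sub>m 1\<^sub>m p, - 1\<^sub>m p)" for Q
  proof -
    have "\<forall>LG\<in>set (map f (zip (Ablocks n Xs) \<eta>s)). Q LG"
    proof (rule set_map_zip_all)
      show lA: "length \<eta>s = length (Ablocks n Xs)" using len unfolding Ablocks_def by simp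
      fix i assume "i < length (Ablocks n Xs)"
      hence "i < length Xs" using lA len by simp
      thus "Q (f (Ablocks n Xs ! i, \<eta>s ! i))" unfolding fi by (rule that(1))
    qed
    thus ?thesis unfolding LGsH_def using that(2) by simp
  qed
  have pdHK: "pd (HKmat n Xs \<mu> \<eta>s)" unfolding HKeq
  proof (rule KKT_pd[OF _ mu_pos refl])
    show "\<forall>LG\<in>set LGsH. okp p LG"
      by (rule allH, rule pairS(1)[OF Gi mu_pos evi], assumption, assumption, rule pI(1))
    show "\<forall>LG\<in>set LGsH. \<forall>z\<in>carrier_vec p. \<forall>v\<in>carrier_vec (dim_col (snd LG)).
        - (z \<bullet> z) / \<mu> \<le> v \<bullet> (fst LG *\<^sub>v v) + 2 * (z \<bullet> (snd LG *\<^sub>v v))"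
    proof (rule allH)
      fix i assume i: "i < length Xs"
      show "\<forall>z\<in>carrier_vec p. \<forall>v\<in>carrier_vec (dim_col (snd (\<eta>s ! i \<cdot>\<^sub>m 1\<^sub>m (dim_col (Ablocks n Xs ! i)), Ablocks n Xs ! i))).
        - (z \<bullet> z) / \<mu> \<le> v \<bullet> (fst (\<eta>s ! i \<cdot>\<^sub>m 1\<^sub>m (dim_col (Ablocks n Xs ! i)), Ablocks n Xs ! i) *\<^sub>v v)
          + 2 * (z \<bullet> (snd (\<eta>s ! i \<cdot>\<^sub>m 1\<^sub>m (dim_col (Ablocks n Xs ! i)), Ablocks n Xs ! i) *\<^sub>v v))"
        using pairS(2)[OF Gi[OF i] mu_pos evi[OF i]] by (simp only: fst_conv snd_conv)
    next
      show "\<forall>z\<in>carrier_vec p. \<forall>v\<in>carrier_vec (dim_col (snd (\<mu> \<cdot>\<^sub>m 1\<^sub>m p, - 1\<^sub>m p :: real mat))).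
        - (z \<bullet> z) / \<mu> \<le> v \<bullet> (fst (\<mu> \<cdot>\<^sub>m 1\<^sub>m p, - 1\<^sub>m p :: real mat) *\<^sub>v v)
          + 2 * (z \<bullet> (snd (\<mu> \<cdot>\<^sub>m 1\<^sub>m p, - 1\<^sub>m p :: real mat) *\<^sub>v v))"
        using pI(2) by (simp only: fst_conv snd_conv dI)
    qed
    show "\<forall>LG\<in>set LGsH. \<forall>z\<in>carrier_vec p. \<forall>v\<in>carrier_vec (dim_col (snd LG)).
        v \<bullet> (fst LG *\<^sub>v v) + 2 * (z \<bullet> (snd LG *\<^sub>v v)) = - (z \<bullet> z) / \<mu> \<longrightarrow> z = 0\<^sub>v p \<longrightarrow> v = 0\<^sub>v (dim_col (snd LG))"
    proof (rule allH)
      fix i assume i: "i < length Xs"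
      show "\<forall>z\<in>carrier_vec p. \<forall>v\<in>carrier_vec (dim_col (snd (\<eta>s ! i \<cdot>\<^sub>m 1\<^sub>m (dim_col (Ablocks n Xs ! i)), Ablocks n Xs ! i))).
        v \<bullet> (fst (\<eta>s ! i \<cdot>\<^sub>m 1\<^sub>m (dim_col (Ablocks n Xs ! i)), Ablocks n Xs ! i) *\<^sub>v v)
          + 2 * (z \<bullet> (snd (\<eta>s ! i \<cdot>\<^sub>m 1\<^sub>m (dim_col (Ablocks n Xs ! i)), Ablocks n Xs ! i) *\<^sub>v v)) = - (z \<bullet> z) / \<mu>
          \<longrightarrow> z = 0\<^sub>v p \<longrightarrow> v = 0\<^sub>v (dim_col (snd (\<eta>s ! i \<cdot>\<^sub>m 1\<^sub>m (dim_col (Ablocks n Xs ! i)), Ablocks n Xs ! i)))"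
        using pairS(3)[OF Gi[OF i] mu_pos evi[OF i]] by (simp only: fst_conv snd_conv)
    next
      show "\<forall>z\<in>carrier_vec p. \<forall>v\<in>carrier_vec (dim_col (snd (\<mu> \<cdot>\<^sub>m 1\<^sub>m p, - 1\<^sub>m p :: real mat))).
        v \<bullet> (fst (\<mu> \<cdot>\<^sub>m 1\<^sub>m p, - 1\<^sub>m p :: real mat) *\<^sub>v v)
          + 2 * (z \<bullet> (snd (\<mu> \<cdot>\<^sub>m 1\<^sub>m p, - 1\<^sub>m p :: real mat) *\<^sub>v v)) = - (z \<bullet> z) / \<mu>
          \<longrightarrow> z = 0\<^sub>v p \<longrightarrow> v = 0\<^sub>v (dim_col (snd (\<mu> \<cdot>\<^sub>m 1\<^sub>m p, - 1\<^sub>m p :: real mat)))"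
        using pI(3) by (simp only: fst_conv snd_conv dI)
    qed
    show "p = 0 \<or> (\<exists>LG\<in>set LGsH. \<forall>z\<in>carrier_vec p. \<forall>v\<in>carrier_vec (dim_col (snd LG)).
        v \<bullet> (fst LG *\<^sub>v v) + 2 * (z \<bullet> (snd LG *\<^sub>v v)) = - (z \<bullet> z) / \<mu> \<longrightarrow> z = 0\<^sub>v p)"
    proof (cases "Xs = []")
      case True thus ?thesis using pdim_Nil[OF rows] p_def by simp
    next
      case False
      hence l0: "0 < length Xs" by simp
      have mem: "f (Ablocks n Xs ! 0, \<eta>s ! 0) \<in> set LGsH" unfolding LGsH_def
        using l0 len by (auto simp: set_zip Ablocks_def intro!: exI[of _ 0])
      show ?thesis
        by (rule disjI2, rule bexI[OF _ mem], unfold fi fst_conv snd_conv, rule pairS(4)[OF Gi[OF l0] mu_pos evi[OF l0]])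
    qed
  qed
  show ?thesis using psdM psdMK pdH pdHK by blast
qed

end
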